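(* Let $\lambda\in P^+$. For a POP $\mathcal P$ with bounding sequence $\lambda$, with associated element $v_{\mathcal P}\in\mathbf U(\mathfrak n^-[t])$, the $\mathfrak h$-weight of $v_{\mathcal P}\,w_\lambda$ in $W(\lambda)$ equals the weight of $\mathcal P$.
   Context: Fix $r\ge 1$. Let $\mathfrak{g}=\mathfrak{sp}_{2r}$ be the Lie algebra of complex $2r\times 2r$ matrices $(a_{i,j})$, rows and columns indexed by $1,\dots,r,-r,\dots,-1$, with $a_{i,j}=-\mathrm{sgn}(i)\,\mathrm{sgn}(j)\,a_{-j,-i}$; $E_{i,j}$ are matrix units. The Cartan subalgebra $\mathfrak h$ is spanned by $E_{i,i}-E_{-i,-i}$, $i\in I=\{1,\dots,r\}$, and $\varepsilon_i\in\mathfrak h^*$ satisfy $\langle \varepsilon_i, E_{j,j}-E_{-j,-j}\rangle=\delta_{i,j}$. Root vectors: for $1\le i<j\le r$, $x^+_{i,j-1}=E_{i,j}-E_{-j,-i}$, $x^-_{i,j-1}=E_{j,i}-E_{-i,-j}$, $x^+_{i,\overline{j}}=E_{i,-j}+E_{j,-i}$, $x^-_{i,\overline{j}}=E_{-j,i}+E_{-i,j}$; $x^+_{i,\overline{i}}=E_{i,-i}$, $x^-_{i,\overline{i}}=E_{-i,i}$; $x^\pm_{i,r}:=x^\pm_{i,\overline{r}}$. Let $\mathfrak n^\pm$ be spanned by $x^\pm_{i,j}$ ($1\le i\le j<r$) and $x^\pm_{i,\overline{j}}$ ($1\le i\le j\le r$). Fundamental weights $\omega_i=\varepsilon_1+\dots+\varepsilon_i$;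 $P^+=\sum_i\mathbb N\omega_i$; for $\lambda=\sum m_i\omega_i$ put $\lambda_i=m_i+\dots+m_r$. $\mathfrak g[t]=\mathfrak g\otimes\mathbb C[t]$ is the current algebra. The local Weyl module $W(\lambda)$ is the cyclic $\mathfrak g[t]$-module generated by $w_\lambda$ with relations $\mathfrak n^+[t]w_\lambda=0$, $(h\otimes t^s)w_\lambda=\langle\lambda,h\rangle\delta_{s,0}w_\lambda$, $(x^-_{i,i})^{m_i+1}w_\lambda=0$. A pattern with bounding sequence $\lambda$: integers $\eta^j_i,\lambda^j_i$ ($1\le i\le j\le r$), $\lambda^r_i=\lambda_i$, with $\lambda^j_i\ge\eta^j_i\ge\lambda^j_{i+1}$ ($1\le i\le j\le r$, $\lambda^j_{j+1}=0$) and $\eta^{j+1}_i\ge\lambda^j_i\ge\eta^{j+1}_{i+1}$ ($1\le i\le j<r$). Its weight is $\sum_{j=1}^r a_j\varepsilon_j$ with $a_j=2\sum_{i=1}^j\eta^j_i-\sum_{i=1}^j\lambda^j_i-\sum_{i=1}^{j-1}\lambda^{j-1}_i$. Differences: $\ell_{i,\overline{j}}=\lambda^j_i-\eta^j_i$, $\ell'_{i,\overline{j}}=\eta^j_i-\lambda^j_{i+1}$ ($1\le i\le j\le r$); $\ell_{i,j}=\eta^{j+1}_i-\lambda^j_i$, $\ell'_{i,j}=\lambda^j_i-\eta^{j+1}_{i+1}$ ($1\le i\le j<r$). A partition $\mathbf s=(\mathbf s(1)\le\dots\le\mathbf s(\ell))\in\mathbb N^\ell$ fits into $(\ell,\ell')$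 if $\mathbf s(\ell)\le\ell'$. A POP is a pattern with partitions $\mathbf s_{i,\overline{j}}$ fitting $(\ell_{i,\overline{j}},\ell'_{i,\overline{j}})$ and $\mathbf s_{i,j}$ fitting $(\ell_{i,j},\ell'_{i,j})$; its weight is the weight of its pattern. With $\mathbf{x}(\ell,\mathbf s)=(x\otimes t^{\mathbf s(1)})\cdots(x\otimes t^{\mathbf s(\ell)})$, the associated element is $v_{\mathcal P}=X_{\overline1}X_1\cdots X_{\overline{r-1}}X_{r-1}X_{\overline r}$, $X_{\overline j}=\prod_{i=1}^{j}\mathbf x^-_{i,\overline j}(\ell_{i,\overline j},\mathbf s_{i,\overline j})$, $X_j=\prod_{i=1}^{j}\mathbf x^-_{i,j}(\ell_{i,j},\mathbf s_{i,j})$ (factors in increasing order of $i$). *)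

theory Defs
  imports Complex_Main
begin

text \<open>Matrices of sp_{2r}: rows/columns indexed by the nonzero integers i with |i| \<le> r.\<close>
type_synonym mat = "int \<Rightarrow> int \<Rightarrow> complex"

definition Idx :: "nat \<Rightarrow> int set" where
  "Idx r = {i. 1 \<le> \<bar>i\<bar> \<and> \<bar>i\<bar> \<le> int r}"

definition sp :: "nat \<Rightarrow> mat \<Rightarrow> bool" where
  "sp r X \<longleftrightarrow> (\<forall>i j. (i \<notin> Idx r \<or> j \<notin> Idx r) \<longrightarrow> X i j = 0) \<and>
     (\<forall>i\<in>Idx r. \<forall>j\<in>Idx r. X i j = - of_int (sgn i * sgn j) * X (-j) (-i))"

definition bracket :: "nat \<Rightarrow> mat \<Rightarrow> mat \<Rightarrow> mat" where
  "bracket r X Y = (\<lambda>i j. (\<Sum>k\<in>Idx r. X i k * Y k j) - (\<Sum>k\<in>Idx r. Y i k * X k j))"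

definition cartan :: "nat \<Rightarrow> mat set" where
  "cartan r = {h. sp r h \<and> (\<forall>i j. i \<noteq> j \<longrightarrow> h i j = 0)}"

definition E :: "int \<Rightarrow> int \<Rightarrow> mat" where
  "E a b = (\<lambda>i j. if i = a \<and> j = b then 1 else 0)"

definition madd :: "mat \<Rightarrow> mat \<Rightarrow> mat" where
  "madd X Y = (\<lambda>i j. X i j + Y i j)"

definition msub :: "mat \<Rightarrow> mat \<Rightarrow> mat" where
  "msub X Y = (\<lambda>i j. X i j - Y i j)"

text \<open>Root vectors. xp i j / xm i j stand for x^\<pm>_{i,j} (1 \<le> i \<le> j < r), i.e.
  x^+_{i,j} = E_{i,j+1} - E_{-(j+1),-i};  xpb i j / xmb i j stand for x^\<pm>_{i,\<bar>j}.\<close>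
definition xp :: "nat \<Rightarrow> nat \<Rightarrow> mat" where
  "xp i j = msub (E (int i) (int j + 1)) (E (- (int j + 1)) (- int i))"
definition xm :: "nat \<Rightarrow> nat \<Rightarrow> mat" where
  "xm i j = msub (E (int j + 1) (int i)) (E (- int i) (- (int j + 1)))"
definition xpb :: "nat \<Rightarrow> nat \<Rightarrow> mat" where
  "xpb i j = (if i = j then E (int i) (- int i)
              else madd (E (int i) (- int j)) (E (int j) (- int i)))"
definition xmb :: "nat \<Rightarrow> nat \<Rightarrow> mat" where
  "xmb i j = (if i = j then E (- int i) (int i)
              else madd (E (- int j) (int i)) (E (- int i) (int j)))"

text \<open>x^-_{i,i} with the convention x^-_{r,r} := x^-_{r,\<bar>r}.\<close>
definition xm_diag :: "nat \<Rightarrow> nat \<Rightarrow> mat" where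
  "xm_diag r i = (if i < r then xm i i else xmb r r)"

text \<open>lambda_i = m_i + ... + m_r for lambda = \<Sum> m_i omega_i.\<close>
definition lamb :: "(nat \<Rightarrow> nat) \<Rightarrow> nat \<Rightarrow> nat \<Rightarrow> nat" where
  "lamb m r i = (\<Sum>k=i..r. m k)"

text \<open>A complex representation rho of the current algebra sp_{2r}[t] on the complex
  vector space with scalar multiplication sc; rho x s is the action of x \<otimes> t^s.\<close>
definition g_module :: "nat \<Rightarrow> (complex \<Rightarrow> 'v::ab_group_add \<Rightarrow> 'v) \<Rightarrow> (mat \<Rightarrow> nat \<Rightarrow> 'v \<Rightarrow> 'v) \<Rightarrow> bool" where
  "g_module r sc \<rho> \<longleftrightarrow> vector_space sc \<and>
     (\<forall>x s. sp r x \<longrightarrow> Vector_Spaces.linear sc sc (\<rho> x s)) \<and>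
     (\<forall>x y a b s. sp r x \<longrightarrow> sp r y \<longrightarrow>
        \<rho> (\<lambda>i j. a * x i j + b * y i j) s = (\<lambda>v. sc a (\<rho> x s v) + sc b (\<rho> y s v))) \<and>
     (\<forall>x y s u. sp r x \<longrightarrow> sp r y \<longrightarrow>
        \<rho> (bracket r x y) (s + u) = (\<lambda>v. \<rho> x s (\<rho> y u v) - \<rho> y u (\<rho> x s v)))"

text \<open>w satisfies the defining relations of the generator w_lambda of the local Weyl module.\<close>
definition weyl_gen :: "nat \<Rightarrow> (nat \<Rightarrow> nat) \<Rightarrow> (complex \<Rightarrow> 'v::ab_group_add \<Rightarrow> 'v) \<Rightarrow> (mat \<Rightarrow> nat \<Rightarrow> 'v \<Rightarrow> 'v) \<Rightarrow> 'v \<Rightarrow> bool" where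
  "weyl_gen r m sc \<rho> w \<longleftrightarrow>
     (\<forall>i j s. 1 \<le> i \<and> i \<le> j \<and> j < r \<longrightarrow> \<rho> (xp i j) s w = 0) \<and>
     (\<forall>i j s. 1 \<le> i \<and> i \<le> j \<and> j \<le> r \<longrightarrow> \<rho> (xpb i j) s w = 0) \<and>
     (\<forall>h s. h \<in> cartan r \<longrightarrow>
        \<rho> h s w = (if s = 0 then sc (\<Sum>k=1..r. of_nat (lamb m r k) * h (int k) (int k)) w else 0)) \<and>
     (\<forall>i. 1 \<le> i \<and> i \<le> r \<longrightarrow> (\<rho> (xm_diag r i) 0 ^^ (m i + 1)) w = 0)"

text \<open>Patterns: eta j i = eta^j_i, lam j i = lambda^j_i.\<close>
definition is_pattern :: "nat \<Rightarrow> (nat \<Rightarrow> nat) \<Rightarrow> (nat \<Rightarrow> nat \<Rightarrow> int) \<Rightarrow> (nat \<Rightarrow> nat \<Rightarrow> int) \<Rightarrow> bool" where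
  "is_pattern r m eta lam \<longleftrightarrow>
     (\<forall>i. 1 \<le> i \<and> i \<le> r \<longrightarrow> lam r i = int (lamb m r i)) \<and>
     (\<forall>i j. 1 \<le> i \<and> i \<le> j \<and> j \<le> r \<longrightarrow>
        lam j i \<ge> eta j i \<and> eta j i \<ge> (if i = j then 0 else lam j (i + 1))) \<and>
     (\<forall>i j. 1 \<le> i \<and> i \<le> j \<and> j < r \<longrightarrow>
        eta (j + 1) i \<ge> lam j i \<and> lam j i \<ge> eta (j + 1) (i + 1))"

definition pattern_weight :: "(nat \<Rightarrow> nat \<Rightarrow> int) \<Rightarrow> (nat \<Rightarrow> nat \<Rightarrow> int) \<Rightarrow> nat \<Rightarrow> int" where
  "pattern_weight eta lam j = 2 * (\<Sum>i=1..j. eta j i) - (\<Sum>i=1..j. lam j i) - (\<Sum>i=1..j-1. lam (j-1) i)"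

definition ellb :: "(nat \<Rightarrow> nat \<Rightarrow> int) \<Rightarrow> (nat \<Rightarrow> nat \<Rightarrow> int) \<Rightarrow> nat \<Rightarrow> nat \<Rightarrow> int" where
  "ellb eta lam i j = lam j i - eta j i"
definition ellb' :: "(nat \<Rightarrow> nat \<Rightarrow> int) \<Rightarrow> (nat \<Rightarrow> nat \<Rightarrow> int) \<Rightarrow> nat \<Rightarrow> nat \<Rightarrow> int" where
  "ellb' eta lam i j = eta j i - (if i = j then 0 else lam j (i + 1))"
definition ell :: "(nat \<Rightarrow> nat \<Rightarrow> int) \<Rightarrow> (nat \<Rightarrow> nat \<Rightarrow> int) \<Rightarrow> nat \<Rightarrow> nat \<Rightarrow> int" where
  "ell eta lam i j = eta (j + 1) i - lam j i"
definition ell' :: "(nat \<Rightarrow> nat \<Rightarrow> int) \<Rightarrow> (nat \<Rightarrow> nat \<Rightarrow> int) \<Rightarrow> nat \<Rightarrow> nat \<Rightarrow> int" where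
  "ell' eta lam i j = lam j i - eta (j + 1) (i + 1)"

definition fits :: "nat list \<Rightarrow> int \<Rightarrow> int \<Rightarrow> bool" where
  "fits s l l' \<longleftrightarrow> int (length s) = l \<and> sorted s \<and> (s \<noteq> [] \<longrightarrow> int (last s) \<le> l')"

definition is_POP :: "nat \<Rightarrow> (nat \<Rightarrow> nat) \<Rightarrow> (nat \<Rightarrow> nat \<Rightarrow> int) \<Rightarrow> (nat \<Rightarrow> nat \<Rightarrow> int)
      \<Rightarrow> (nat \<Rightarrow> nat \<Rightarrow> nat list) \<Rightarrow> (nat \<Rightarrow> nat \<Rightarrow> nat list) \<Rightarrow> bool" where
  "is_POP r m eta lam Sb S \<longleftrightarrow> is_pattern r m eta lam \<and>
     (\<forall>i j. 1 \<le> i \<and> i \<le> j \<and> j \<le> r \<longrightarrow> fits (Sb i j) (ellb eta lam i j) (ellb' eta lam i j)) \<and>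
     (\<forall>i j. 1 \<le> i \<and> i \<le> j \<and> j < r \<longrightarrow> fits (S i j) (ell eta lam i j) (ell' eta lam i j))"

text \<open>x(l, s) = (x \<otimes> t^{s(1)}) ... (x \<otimes> t^{s(l)}) acting through rho.\<close>
definition xpow :: "(mat \<Rightarrow> nat \<Rightarrow> 'v \<Rightarrow> 'v) \<Rightarrow> mat \<Rightarrow> nat list \<Rightarrow> 'v \<Rightarrow> 'v" where
  "xpow \<rho> x ss = foldr (\<lambda>s f. \<rho> x s \<circ> f) ss id"

definition Xbar :: "(mat \<Rightarrow> nat \<Rightarrow> 'v \<Rightarrow> 'v) \<Rightarrow> (nat \<Rightarrow> nat \<Rightarrow> nat list) \<Rightarrow> nat \<Rightarrow> 'v \<Rightarrow> 'v" where
  "Xbar \<rho> Sb j = foldr (\<circ>) (map (\<lambda>i. xpow \<rho> (xmb i j) (Sb i j)) [1..<j+1]) id"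

definition Xj :: "(mat \<Rightarrow> nat \<Rightarrow> 'v \<Rightarrow> 'v) \<Rightarrow> (nat \<Rightarrow> nat \<Rightarrow> nat list) \<Rightarrow> nat \<Rightarrow> 'v \<Rightarrow> 'v" where
  "Xj \<rho> S j = foldr (\<circ>) (map (\<lambda>i. xpow \<rho> (xm i j) (S i j)) [1..<j+1]) id"

text \<open>v_P = X_{\<bar>1} X_1 ... X_{\<bar>(r-1)} X_{r-1} X_{\<bar>r}, as an operator.\<close>
definition vP :: "nat \<Rightarrow> (mat \<Rightarrow> nat \<Rightarrow> 'v \<Rightarrow> 'v) \<Rightarrow> (nat \<Rightarrow> nat \<Rightarrow> nat list) \<Rightarrow> (nat \<Rightarrow> nat \<Rightarrow> nat list) \<Rightarrow> 'v \<Rightarrow> 'v" where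
  "vP r \<rho> Sb S = foldr (\<circ>) (concat (map (\<lambda>j. [Xbar \<rho> Sb j, Xj \<rho> S j]) [1..<r]) @ [Xbar \<rho> Sb r]) id"

end

theory Submission
  imports Defs
begin

lemma lin_scale: "Vector_Spaces.linear sc sc f \<Longrightarrow> f (sc a v) = sc a (f v)"
  by (meson Vector_Spaces.linear_def module_hom.scale)
lemma vs_zero: "vector_space sc \<Longrightarrow> sc 0 v = 0"
  by (simp add: module.scale_zero_left module_iff_vector_space)
lemma vs_distrib: "vector_space sc \<Longrightarrow> sc a v + sc b v = sc (a+b) v"
  by (simp add: module.scale_left_distrib module_iff_vector_space)

lemma finite_Idx: "finite (Idx r)"
  by (rule finite_subset[of _ "{- int r..int r}"]) (auto simp: Idx_def)

lemma cartan_out: "h \<in> cartan r \<Longrightarrow> i \<notin> Idx r \<Longrightarrow> h i k = 0"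
  by (auto simp: cartan_def sp_def)
lemma cartan_neg: assumes h: "h \<in> cartan r" and i: "1 \<le> i" "i \<le> int r" shows "h (-i) (-i) = - h i i"
proof -
  have "i \<in> Idx r" using i unfolding Idx_def by auto
  then have "h i i = - of_int (sgn i * sgn i) * h (-i) (-i)" using h unfolding cartan_def sp_def by blast
  moreover have "sgn i * sgn i = 1" using i by simp
  ultimately show ?thesis by simp
qed

lemma bracket_cartan:
  assumes "h \<in> cartan r"
  shows "bracket r h x i j = (h i i - h j j) * x i j"
proof -
  have d: "\<And>a b. a \<noteq> b \<Longrightarrow> h a b = 0" using assms by (auto simp: cartan_def)
  have 1: "(\<Sum>k\<in>Idx r. h i k * x k j) = h i i * x i j"
  proof -
    have "(\<Sum>k\<in>Idx r. h i k * x k j) = (\<Sum>k\<in>Idx r. if i = k then h i i * x i j else 0)"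
      by (rule sum.cong) (auto simp: d)
    also have "\<dots> = h i i * x i j"
      using cartan_out[OF assms, of i i] by (simp add: finite_Idx)
    finally show ?thesis .
  qed
  have 2: "(\<Sum>k\<in>Idx r. x i k * h k j) = x i j * h j j"
  proof -
    have "(\<Sum>k\<in>Idx r. x i k * h k j) = (\<Sum>k\<in>Idx r. if k = j then x i j * h j j else 0)"
      by (rule sum.cong) (auto simp: d)
    also have "\<dots> = x i j * h j j"
      using cartan_out[OF assms, of j j] by (simp add: finite_Idx)
    finally show ?thesis .
  qed
  show ?thesis unfolding bracket_def 1 2 by (simp add: algebra_simps)
qed

lemma xm_nz: "xm i j a b \<noteq> 0 \<Longrightarrow> (a = int j + 1 \<and> b = int i) \<or> (a = - int i \<and> b = - (int j + 1))"
  unfolding xm_def msub_def E_def by (simp split: if_split_asm)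
lemma xmb_nz: "xmb i j a b \<noteq> 0 \<Longrightarrow> (a = - int j \<and> b = int i) \<or> (a = - int i \<and> b = int j)"
  unfolding xmb_def madd_def E_def by (simp split: if_split_asm)
lemma xm_flip: "xm i j (-b) (-a) = - xm i j a b"
  unfolding xm_def msub_def E_def by (auto simp: minus_equation_iff[of b] minus_equation_iff[of a])
lemma xmb_flip: "xmb i j (-b) (-a) = xmb i j a b"
  unfolding xmb_def madd_def E_def by (auto simp: minus_equation_iff[of b] minus_equation_iff[of a])

lemma sp_xm: assumes "1 \<le> i" "i \<le> j" "j < r" shows "sp r (xm i j)"
  unfolding sp_def
proof (intro conjI allI impI ballI)
  fix a b assume ab: "a \<notin> Idx r \<or> b \<notin> Idx r"
  show "xm i j a b = 0"
  proof (rule ccontr)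
    assume "xm i j a b \<noteq> 0"
    from xm_nz[OF this] show False using ab assms unfolding Idx_def by auto
  qed
next
  fix a b assume "a \<in> Idx r" "b \<in> Idx r"
  show "xm i j a b = - of_int (sgn a * sgn b) * xm i j (- b) (- a)"
  proof (cases "xm i j a b = 0")
    case True then show ?thesis by (simp add: xm_flip)
  next
    case False
    then have "sgn a * sgn b = 1" using xm_nz[of i j a b] assms by auto
    then show ?thesis by (simp add: xm_flip)
  qed
qed

lemma sp_xmb: assumes "1 \<le> i" "i \<le> j" "j \<le> r" shows "sp r (xmb i j)"
  unfolding sp_def
proof (intro conjI allI impI ballI)
  fix a b assume ab: "a \<notin> Idx r \<or> b \<notin> Idx r"
  show "xmb i j a b = 0"
  proof (rule ccontr)
    assume "xmb i j a b \<noteq> 0"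
    from xmb_nz[OF this] show False using ab assms unfolding Idx_def by auto
  qed
next
  fix a b assume "a \<in> Idx r" "b \<in> Idx r"
  show "xmb i j a b = - of_int (sgn a * sgn b) * xmb i j (- b) (- a)"
  proof (cases "xmb i j a b = 0")
    case True then show ?thesis by (simp add: xmb_flip)
  next
    case False
    then have "sgn a * sgn b = -1" using xmb_nz[of i j a b] assms by auto
    then show ?thesis by (simp add: xmb_flip)
  qed
qed

definition shifts :: "nat \<Rightarrow> (complex \<Rightarrow> 'v::ab_group_add \<Rightarrow> 'v) \<Rightarrow> (mat \<Rightarrow> nat \<Rightarrow> 'v \<Rightarrow> 'v) \<Rightarrow> mat \<Rightarrow> ('v \<Rightarrow> 'v) \<Rightarrow> complex \<Rightarrow> bool" where
  "shifts r sc \<rho> h f a \<longleftrightarrow> (\<forall>v c. \<rho> h 0 v = sc c v \<longrightarrow> \<rho> h 0 (f v) = sc (c + a) (f v))"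

lemma shifts_id: "shifts r sc \<rho> h id 0" by (simp add: shifts_def)
lemma shifts_comp: "shifts r sc \<rho> h f a \<Longrightarrow> shifts r sc \<rho> h g b \<Longrightarrow> shifts r sc \<rho> h (f \<circ> g) (a + b)"
  unfolding shifts_def by (simp add: add.commute add.left_commute)

lemma shifts_foldr:
  "(\<forall>p\<in>set P. shifts r sc \<rho> h (fst p) (snd p)) \<Longrightarrow>
   shifts r sc \<rho> h (foldr (\<circ>) (map fst P) id) (sum_list (map snd P))"
  by (induction P) (auto simp: shifts_id intro: shifts_comp)

lemma shifts_root:
  assumes g: "g_module r sc \<rho>" and h: "h \<in> cartan r" and x: "sp r x"
    and al: "\<And>i j. x i j \<noteq> 0 \<Longrightarrow> h i i - h j j = \<alpha>"
  shows "shifts r sc \<rho> h (\<rho> x s) \<alpha>"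
  unfolding shifts_def
proof (intro allI impI)
  fix v c assume hv: "\<rho> h 0 v = sc c v"
  have vs: "vector_space sc" and lin: "Vector_Spaces.linear sc sc (\<rho> x s)"
    using g x by (auto simp: g_module_def)
  have sph: "sp r h" using h by (simp add: cartan_def)
  have br: "bracket r h x = (\<lambda>i j. \<alpha> * x i j + 0 * x i j)"
    using al by (auto simp: bracket_cartan[OF h] fun_eq_iff)
  have B0: "\<rho> (bracket r h x) (0 + s) = (\<lambda>v. \<rho> h 0 (\<rho> x s v) - \<rho> x s (\<rho> h 0 v))"
    using g sph x unfolding g_module_def by blast
  have B1: "\<rho> h 0 (\<rho> x s v) - \<rho> x s (\<rho> h 0 v) = \<rho> (bracket r h x) s v"
    using fun_cong[OF B0, of v] by simp
  have gl: "\<And>a b s. \<rho> (\<lambda>i j. a * x i j + b * x i j) s = (\<lambda>v. sc a (\<rho> x s v) + sc b (\<rho> x s v))"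
    using g x unfolding g_module_def by blast
  have B2: "\<rho> (bracket r h x) s v = sc \<alpha> (\<rho> x s v)"
    unfolding br gl by (simp add: vs_zero[OF vs])
  have "\<rho> h 0 (\<rho> x s v) = sc \<alpha> (\<rho> x s v) + \<rho> x s (\<rho> h 0 v)"
    using B1 B2 by (metis diff_add_cancel)
  also have "\<dots> = sc (c + \<alpha>) (\<rho> x s v)"
    using hv lin_scale[OF lin] vs_distrib[OF vs] by (simp add: add.commute)
  finally show "\<rho> h 0 (\<rho> x s v) = sc (c + \<alpha>) (\<rho> x s v)" .
qed

lemma shifts_xpow:
  assumes "\<And>s. shifts r sc \<rho> h (\<rho> x s) \<alpha>"
  shows "shifts r sc \<rho> h (xpow \<rho> x ss) (of_nat (length ss) * \<alpha>)"
proof -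
  have "shifts r sc \<rho> h (foldr (\<circ>) (map fst (map (\<lambda>s. (\<rho> x s, \<alpha>)) ss)) id)
     (sum_list (map snd (map (\<lambda>s. (\<rho> x s, \<alpha>)) ss)))"
    by (rule shifts_foldr) (auto simp: assms)
  moreover have "foldr (\<circ>) (map fst (map (\<lambda>s. (\<rho> x s, \<alpha>)) ss)) id = xpow \<rho> x ss"
    unfolding xpow_def by (induction ss) auto
  ultimately show ?thesis by (simp add: o_def sum_list_triv)
qed

lemma exp3: "(\<Sum>i\<in>A. (a i - b i) * (-(c i + (k::complex)))) = - (\<Sum>i\<in>A. a i * c i) - k * (\<Sum>i\<in>A. a i) + (\<Sum>i\<in>A. b i * c i) + k * (\<Sum>i\<in>A. b i)"
  by (simp add: algebra_simps sum.distrib sum_subtractf sum_distrib_left sum_negf)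
lemma exp4: "(\<Sum>i\<in>A. (a i - b i) * ((k::complex) - c i)) = k * (\<Sum>i\<in>A. a i) - (\<Sum>i\<in>A. a i * c i) - k * (\<Sum>i\<in>A. b i) + (\<Sum>i\<in>A. b i * c i)"
proof -
  have "(\<Sum>i\<in>A. (a i - b i) * (k - c i)) = (\<Sum>i\<in>A. ((k * a i - a i * c i) - k * b i) + b i * c i)"
    by (rule sum.cong) (auto simp: algebra_simps)
  thus ?thesis by (simp only: sum.distrib sum_subtractf sum_distrib_left)
qed
lemma sum_lt_Suc: "f 0 = (0::'a::comm_monoid_add) \<Longrightarrow> sum f {1..<Suc n} = sum f {1..<n} + f n"
  by (cases n) (auto simp: add.commute)

lemma ident:
  fixes L E :: "nat \<Rightarrow> nat \<Rightarrow> complex" and d :: "nat \<Rightarrow> complex"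
  shows "(\<Sum>k=1..n. L n k * d k) + (\<Sum>j=1..n. \<Sum>i=1..j. (L j i - E j i) * (-(d i + d j)))
    + (\<Sum>j=1..<n. \<Sum>i=1..j. (E (j+1) i - L j i) * (d (j+1) - d i))
    = (\<Sum>k=1..n. (2 * (\<Sum>i=1..k. E k i) - (\<Sum>i=1..k. L k i) - (\<Sum>i=1..k-1. L (k-1) i)) * d k)"
proof (induction n)
  case 0
  then show ?case by simp
next
  case (Suc n)
  let ?e = "E (Suc n) (Suc n)" and ?D = "d (Suc n)"
  have t3: "(\<Sum>i=1..Suc n. (L (Suc n) i - E (Suc n) i) * (-(d i + ?D)))
     = - (\<Sum>i=1..Suc n. L (Suc n) i * d i) - ?D * (\<Sum>i=1..Suc n. L (Suc n) i)
       + (\<Sum>i=1..Suc n. E (Suc n) i * d i) + ?D * (\<Sum>i=1..Suc n. E (Suc n) i)"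
    by (rule exp3)
  have t4: "(\<Sum>i=1..n. (E (Suc n) i - L n i) * (?D - d i))
     = ?D * (\<Sum>i=1..n. E (Suc n) i) - (\<Sum>i=1..n. E (Suc n) i * d i) - ?D * (\<Sum>i=1..n. L n i) + (\<Sum>i=1..n. L n i * d i)"
    by (rule exp4)
  have s3: "(\<Sum>j=1..Suc n. \<Sum>i=1..j. (L j i - E j i) * (-(d i + d j)))
     = (\<Sum>j=1..n. \<Sum>i=1..j. (L j i - E j i) * (-(d i + d j))) + (\<Sum>i=1..Suc n. (L (Suc n) i - E (Suc n) i) * (-(d i + ?D)))"
    by simp
  have s4: "(\<Sum>j=1..<Suc n. \<Sum>i=1..j. (E (j+1) i - L j i) * (d (j+1) - d i))
     = (\<Sum>j=1..<n. \<Sum>i=1..j. (E (j+1) i - L j i) * (d (j+1) - d i)) + (\<Sum>i=1..n. (E (Suc n) i - L n i) * (?D - d i))"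
    by (subst sum_lt_Suc) auto
  have s5: "(\<Sum>k=1..Suc n. (2 * (\<Sum>i=1..k. E k i) - (\<Sum>i=1..k. L k i) - (\<Sum>i=1..k-1. L (k-1) i)) * d k)
     = (\<Sum>k=1..n. (2 * (\<Sum>i=1..k. E k i) - (\<Sum>i=1..k. L k i) - (\<Sum>i=1..k-1. L (k-1) i)) * d k)
       + (2 * ((\<Sum>i=1..n. E (Suc n) i) + ?e) - (\<Sum>i=1..Suc n. L (Suc n) i) - (\<Sum>i=1..n. L n i)) * ?D"
    by simp
  show ?case
    unfolding s3 s4 s5 t3 t4 Suc.IH[symmetric]
    by (simp add: algebra_simps)
qed

lemma sl_pairs: "sum_list (map snd (concat (map (\<lambda>j. [(f j, x j), (g j, y j)]) xs))) = sum_list (map (\<lambda>j. x j + y j) xs)"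
  by (induction xs) (simp_all add: add.assoc)

lemma sl: "sum_list (map f [1..<j+1]) = sum f {1..j}"
  by (simp only: interv_sum_list_conv_sum_set_nat set_upt Suc_eq_plus1[symmetric] atLeastLessThanSuc_atLeastAtMost)

lemma cartan_negn: "h \<in> cartan r \<Longrightarrow> 1 \<le> k \<Longrightarrow> k \<le> r \<Longrightarrow> h (- int k) (- int k) = - h (int k) (int k)"
  using cartan_neg[of h r "int k"] by simp

lemma shifts_Xbar:
  assumes g: "g_module r sc \<rho>" and h: "h \<in> cartan r" and j: "j \<le> r"
  shows "shifts r sc \<rho> h (Xbar \<rho> Sb j)
     (\<Sum>i=1..j. of_nat (length (Sb i j)) * (- (h (int i) (int i) + h (int j) (int j))))"
proof -
  let ?P = "map (\<lambda>i. (xpow \<rho> (xmb i j) (Sb i j), of_nat (length (Sb i j)) * (- (h (int i) (int i) + h (int j) (int j))))) [1..<j+1]"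
  have "shifts r sc \<rho> h (foldr (\<circ>) (map fst ?P) id) (sum_list (map snd ?P))"
  proof (rule shifts_foldr, rule ballI)
    fix p assume "p \<in> set ?P"
    then obtain i where i: "1 \<le> i" "i \<le> j" and p: "p = (xpow \<rho> (xmb i j) (Sb i j), of_nat (length (Sb i j)) * (- (h (int i) (int i) + h (int j) (int j))))"
      by auto
    have "shifts r sc \<rho> h (\<rho> (xmb i j) s) (- (h (int i) (int i) + h (int j) (int j)))" for s
    proof (rule shifts_root[OF g h sp_xmb[OF i j]])
      fix a b assume "xmb i j a b \<noteq> 0"
      then show "h a a - h b b = (- (h (int i) (int i) + h (int j) (int j)))"
        using cartan_negn[OF h, of i] cartan_negn[OF h, of j] cartan_negn[OF h, of "j+1"] i j
        by (auto simp: xmb_def madd_def E_def split: if_splits)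
    qed
    then show "shifts r sc \<rho> h (fst p) (snd p)"
      unfolding p by (simp add: shifts_xpow)
  qed
  moreover have "foldr (\<circ>) (map fst ?P) id = Xbar \<rho> Sb j"
    by (simp add: Xbar_def o_def)
  moreover have "sum_list (map snd ?P) = (\<Sum>i=1..j. of_nat (length (Sb i j)) * (- (h (int i) (int i) + h (int j) (int j))))"
    by (simp only: map_map o_def snd_conv sl)
  ultimately show ?thesis by metis
qed

lemma shifts_Xj:
  assumes g: "g_module r sc \<rho>" and h: "h \<in> cartan r" and j: "j < r"
  shows "shifts r sc \<rho> h (Xj \<rho> S j)
     (\<Sum>i=1..j. of_nat (length (S i j)) * (h (int j + 1) (int j + 1) - h (int i) (int i)))"
proof -
  let ?P = "map (\<lambda>i. (xpow \<rho> (xm i j) (S i j), of_nat (length (S i j)) * (h (int j + 1) (int j + 1) - h (int i) (int i)))) [1..<j+1]"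
  have "shifts r sc \<rho> h (foldr (\<circ>) (map fst ?P) id) (sum_list (map snd ?P))"
  proof (rule shifts_foldr, rule ballI)
    fix p assume "p \<in> set ?P"
    then obtain i where i: "1 \<le> i" "i \<le> j" and p: "p = (xpow \<rho> (xm i j) (S i j), of_nat (length (S i j)) * (h (int j + 1) (int j + 1) - h (int i) (int i)))"
      by auto
    have "shifts r sc \<rho> h (\<rho> (xm i j) s) (h (int j + 1) (int j + 1) - h (int i) (int i))" for s
    proof (rule shifts_root[OF g h sp_xm[OF i j]])
      fix a b assume "xm i j a b \<noteq> 0"
      then have "(a = int j + 1 \<and> b = int i) \<or> (a = - int i \<and> b = - (int j + 1))"
        by (rule xm_nz)
      then show "h a a - h b b = h (int j + 1) (int j + 1) - h (int i) (int i)"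
        using cartan_neg[OF h, of "int i"] cartan_neg[OF h, of "int j + 1"] i j by auto
    qed
    then show "shifts r sc \<rho> h (fst p) (snd p)"
      unfolding p by (simp add: shifts_xpow)
  qed
  moreover have "foldr (\<circ>) (map fst ?P) id = Xj \<rho> S j"
    by (simp add: Xj_def o_def)
  moreover have "sum_list (map snd ?P) = (\<Sum>i=1..j. of_nat (length (S i j)) * (h (int j + 1) (int j + 1) - h (int i) (int i)))"
    by (simp only: map_map o_def snd_conv sl)
  ultimately show ?thesis by metis
qed

theorem lemma3p1:
  fixes r :: nat and m :: "nat \<Rightarrow> nat"
    and sc :: "complex \<Rightarrow> 'v::ab_group_add \<Rightarrow> 'v" and \<rho> :: "mat \<Rightarrow> nat \<Rightarrow> 'v \<Rightarrow> 'v"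
    and w :: 'v and eta lam :: "nat \<Rightarrow> nat \<Rightarrow> int" and Sb S :: "nat \<Rightarrow> nat \<Rightarrow> nat list"
  assumes "1 \<le> r"
    and "g_module r sc \<rho>"
    and "weyl_gen r m sc \<rho> w"
    and "is_POP r m eta lam Sb S"
    and "h \<in> cartan r"
  shows "\<rho> h 0 (vP r \<rho> Sb S w)
       = sc (\<Sum>k=1..r. of_int (pattern_weight eta lam k) * h (int k) (int k)) (vP r \<rho> Sb S w)"
proof -
  note g = assms(2) and h = assms(5)
  define d where "d k = h (int k) (int k)" for k
  define ab where "ab j = (\<Sum>i=1..j. of_nat (length (Sb i j)) * (- (d i + d j)))" for j
  define a where "a j = (\<Sum>i=1..j. of_nat (length (S i j)) * (d (j+1) - d i))" for j
  have hw: "\<rho> h 0 w = sc (\<Sum>k=1..r. of_nat (lamb m r k) * d k) w"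
  proof -
    have "\<forall>h s. h \<in> cartan r \<longrightarrow>
        \<rho> h s w = (if s = 0 then sc (\<Sum>k=1..r. of_nat (lamb m r k) * h (int k) (int k)) w else 0)"
      using assms(3) unfolding weyl_gen_def by blast
    then have "\<rho> h 0 w = (if (0::nat) = 0 then sc (\<Sum>k=1..r. of_nat (lamb m r k) * h (int k) (int k)) w else 0)"
      using h by blast
    then show ?thesis unfolding d_def by (simp only: if_True refl)
  qed
  let ?P = "concat (map (\<lambda>j. [(Xbar \<rho> Sb j, ab j), (Xj \<rho> S j, a j)]) [1..<r]) @ [(Xbar \<rho> Sb r, ab r)]"
  have A: "shifts r sc \<rho> h (foldr (\<circ>) (map fst ?P) id) (sum_list (map snd ?P))"
  proof (rule shifts_foldr, clarsimp, intro conjI)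
    show "shifts r sc \<rho> h (Xbar \<rho> Sb r) (ab r)"
      unfolding ab_def d_def by (rule shifts_Xbar[OF g h]) simp
  next
    show "\<forall>x\<in>{Suc 0..<r}. shifts r sc \<rho> h (Xbar \<rho> Sb x) (ab x) \<and> shifts r sc \<rho> h (Xj \<rho> S x) (a x)"
    proof
      fix j assume "j \<in> {Suc 0..<r}"
      then have j: "j < r" by simp
      show "shifts r sc \<rho> h (Xbar \<rho> Sb j) (ab j) \<and> shifts r sc \<rho> h (Xj \<rho> S j) (a j)"
      proof
        show "shifts r sc \<rho> h (Xbar \<rho> Sb j) (ab j)"
          unfolding ab_def d_def by (rule shifts_Xbar[OF g h]) (use j in simp)
        have dj: "d (j+1) = h (int j + 1) (int j + 1)" unfolding d_def by (simp only: of_nat_add of_nat_1)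
        show "shifts r sc \<rho> h (Xj \<rho> S j) (a j)"
          unfolding a_def dj unfolding d_def by (rule shifts_Xj[OF g h j])
      qed
    qed
  qed
  have B: "foldr (\<circ>) (map fst ?P) id = vP r \<rho> Sb S"
    by (simp add: vP_def map_concat o_def)
  have C: "sum_list (map snd ?P) = (\<Sum>j=1..<r. ab j + a j) + ab r"
    by (simp add: sl_pairs interv_sum_list_conv_sum_set_nat)
  have sh: "shifts r sc \<rho> h (vP r \<rho> Sb S) ((\<Sum>j=1..<r. ab j + a j) + ab r)"
    using A unfolding B C .
  have vw: "\<rho> h 0 (vP r \<rho> Sb S w) = sc ((\<Sum>k=1..r. of_nat (lamb m r k) * d k) + ((\<Sum>j=1..<r. ab j + a j) + ab r)) (vP r \<rho> Sb S w)"
    using sh hw unfolding shifts_def by blast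
  define L where "L j i = (of_int (lam j i) :: complex)" for j i
  define Ee where "Ee j i = (of_int (eta j i) :: complex)" for j i
  have pat: "is_pattern r m eta lam" and fSb: "\<And>i j. 1 \<le> i \<and> i \<le> j \<and> j \<le> r \<Longrightarrow> fits (Sb i j) (ellb eta lam i j) (ellb' eta lam i j)"
    and fS: "\<And>i j. 1 \<le> i \<and> i \<le> j \<and> j < r \<Longrightarrow> fits (S i j) (ell eta lam i j) (ell' eta lam i j)"
    using assms(4) unfolding is_POP_def by blast+
  have c0: "(\<Sum>k=1..r. of_nat (lamb m r k) * d k) = (\<Sum>k=1..r. L r k * d k)"
  proof (rule sum.cong)
    fix k assume "k \<in> {1..r}"
    then have "lam r k = int (lamb m r k)" using pat unfolding is_pattern_def by auto
    then show "of_nat (lamb m r k) * d k = L r k * d k" unfolding L_def by simp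
  qed simp
  have abe: "ab j = (\<Sum>i=1..j. (L j i - Ee j i) * (- (d i + d j)))" if "j \<le> r" for j
    unfolding ab_def
  proof (rule sum.cong)
    fix i assume "i \<in> {1..j}"
    then have "int (length (Sb i j)) = lam j i - eta j i" using fSb[of i j] that unfolding fits_def ellb_def by auto
    then have "(of_nat (length (Sb i j)) :: complex) = L j i - Ee j i"
      unfolding L_def Ee_def by (metis of_int_diff of_int_of_nat_eq)
    then show "of_nat (length (Sb i j)) * (- (d i + d j)) = (L j i - Ee j i) * (- (d i + d j))" by simp
  qed simp
  have ae: "a j = (\<Sum>i=1..j. (Ee (j+1) i - L j i) * (d (j+1) - d i))" if "j < r" for j
    unfolding a_def
  proof (rule sum.cong)
    fix i assume "i \<in> {1..j}"
    then have "int (length (S i j)) = eta (j+1) i - lam j i" using fS[of i j] that unfolding fits_def ell_def by auto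
    then have "(of_nat (length (S i j)) :: complex) = Ee (j+1) i - L j i"
      unfolding L_def Ee_def by (metis of_int_diff of_int_of_nat_eq)
    then show "of_nat (length (S i j)) * (d (j+1) - d i) = (Ee (j+1) i - L j i) * (d (j+1) - d i)" by simp
  qed simp
  have tot: "(\<Sum>j=1..<r. ab j + a j) + ab r = (\<Sum>j=1..r. \<Sum>i=1..j. (L j i - Ee j i) * (- (d i + d j)))
      + (\<Sum>j=1..<r. \<Sum>i=1..j. (Ee (j+1) i - L j i) * (d (j+1) - d i))"
  proof -
    have F1: "(\<Sum>j=1..<r. ab j + a j) = (\<Sum>j=1..<r. ab j) + (\<Sum>j=1..<r. a j)" by (simp add: sum.distrib)
    have F2: "(\<Sum>j=1..<r. ab j) + ab r = (\<Sum>j=1..r. ab j)"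
    proof -
      have "(\<Sum>j=1..r. ab j) = (\<Sum>j=1..<Suc r. ab j)" by (simp only: atLeastLessThanSuc_atLeastAtMost)
      also have "\<dots> = (\<Sum>j=1..<r. ab j) + ab r" by (rule sum.atLeastLessThan_Suc) (use assms(1) in simp)
      finally show ?thesis by simp
    qed
    have F3: "(\<Sum>j=1..r. ab j) = (\<Sum>j=1..r. \<Sum>i=1..j. (L j i - Ee j i) * (- (d i + d j)))"
      by (rule sum.cong) (auto simp: abe)
    have F4: "(\<Sum>j=1..<r. a j) = (\<Sum>j=1..<r. \<Sum>i=1..j. (Ee (j+1) i - L j i) * (d (j+1) - d i))"
      by (rule sum.cong) (auto simp: ae)
    have "(\<Sum>j=1..<r. ab j + a j) + ab r = ((\<Sum>j=1..<r. ab j) + ab r) + (\<Sum>j=1..<r. a j)"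
      unfolding F1 by (simp only: ac_simps)
    then show ?thesis unfolding F2 F3 F4 .
  qed
  have pw: "(\<Sum>k=1..r. of_int (pattern_weight eta lam k) * h (int k) (int k))
     = (\<Sum>k=1..r. (2 * (\<Sum>i=1..k. Ee k i) - (\<Sum>i=1..k. L k i) - (\<Sum>i=1..k-1. L (k-1) i)) * d k)"
    unfolding pattern_weight_def L_def Ee_def d_def by simp
  have fin: "(\<Sum>k=1..r. of_nat (lamb m r k) * d k) + ((\<Sum>j=1..<r. ab j + a j) + ab r)
     = (\<Sum>k=1..r. of_int (pattern_weight eta lam k) * h (int k) (int k))"
    unfolding c0 tot pw using ident[where n=r and L=L and E=Ee and d=d] by (simp only: add.assoc)
  show ?thesis using vw unfolding fin .
qed

end
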